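(* Let $F$ be a recurrent set and let $X\subset F$ be a bifix code of finite $F$-degree $d\ge 2$. Let $I=I(X)$, $K=K(X)$, $G=(IA\cap F)\setminus I$ and $D=(AI\cap F)\setminus I$. Then $X'=K\cup(G\cap D)$ is a bifix code of $F$-degree $d-1$.
   Context: $A$ is a finite alphabet. $F\subset A^*$ is recurrent if it is nonempty, closed under factors, and for all $u,w\in F$ there is $v\in F$ with $uvw\in F$. A bifix code is a set of nonempty words none of which is a proper prefix or proper suffix of another. A parse of $w$ with respect to $X$ is a triple $(v,x,u)$ with $w=vxu$, $v$ having no suffix in $X$, $x\in X^*$, $u$ having no prefix in $X$; $\delta_X(w)$ is the number of parses and the $F$-degree is $d_F(X)=\max_{w\in F}\delta_X(w)$. $I(X)=\{w\in A^*\mid A^+wA^+\cap X\neq\emptyset\}$ is the set of internal factors of $X$, and $K(X)=X\cap I(X)$ is the kernel of $X$. *)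

theory Defs
  imports Main "HOL-Library.Sublist"
begin

definition factor :: "'a list \<Rightarrow> 'a list \<Rightarrow> bool" where
  "factor u w \<longleftrightarrow> (\<exists>p s. w = p @ u @ s)"

definition factorial :: "'a list set \<Rightarrow> bool" where
  "factorial F \<longleftrightarrow> (\<forall>w\<in>F. \<forall>u. factor u w \<longrightarrow> u \<in> F)"

definition recurrent :: "'a set \<Rightarrow> 'a list set \<Rightarrow> bool" where
  "recurrent A F \<longleftrightarrow> F \<noteq> {} \<and> F \<subseteq> lists A \<and> factorial F \<and>
     (\<forall>u\<in>F. \<forall>w\<in>F. \<exists>v\<in>F. u @ v @ w \<in> F)"

definition bifix_code :: "'a list set \<Rightarrow> bool" where
  "bifix_code X \<longleftrightarrow> [] \<notin> X \<and>
     (\<forall>x\<in>X. \<forall>y\<in>X. \<not> strict_prefix x y \<and> \<not> strict_suffix x y)"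

definition star :: "'a list set \<Rightarrow> 'a list set" where
  "star X = {concat xs | xs. set xs \<subseteq> X}"

definition parses :: "'a list set \<Rightarrow> 'a list \<Rightarrow> ('a list \<times> 'a list \<times> 'a list) set" where
  "parses X w = {(v, x, u). w = v @ x @ u \<and> (\<forall>s. suffix s v \<longrightarrow> s \<notin> X)
       \<and> x \<in> star X \<and> (\<forall>p. prefix p u \<longrightarrow> p \<notin> X)}"

definition delta :: "'a list set \<Rightarrow> 'a list \<Rightarrow> nat" where
  "delta X w = card (parses X w)"

definition has_F_degree :: "'a list set \<Rightarrow> 'a list set \<Rightarrow> nat \<Rightarrow> bool" where
  "has_F_degree F X d \<longleftrightarrow> (\<exists>w\<in>F. delta X w = d) \<and> (\<forall>w\<in>F. delta X w \<le> d)"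

definition internal :: "'a set \<Rightarrow> 'a list set \<Rightarrow> 'a list set" where
  "internal A X = {w \<in> lists A. \<exists>p s. p \<in> lists A \<and> s \<in> lists A \<and> p \<noteq> [] \<and> s \<noteq> []
       \<and> p @ w @ s \<in> X}"

definition kernel :: "'a set \<Rightarrow> 'a list set \<Rightarrow> 'a list set" where
  "kernel A X = X \<inter> internal A X"

end

theory Submission
  imports Defs
begin


definition noS :: "'a list set \<Rightarrow> 'a list \<Rightarrow> bool" where
  "noS Y v \<longleftrightarrow> (\<forall>s. suffix s v \<longrightarrow> s \<notin> Y)"
definition noP :: "'a list set \<Rightarrow> 'a list \<Rightarrow> bool" where
  "noP Y u \<longleftrightarrow> (\<forall>p. prefix p u \<longrightarrow> p \<notin> Y)"
definition Vs :: "'a list set \<Rightarrow> 'a list \<Rightarrow> 'a list set" where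
  "Vs Y w = {v. prefix v w \<and> noS Y v}"
definition Us :: "'a list set \<Rightarrow> 'a list \<Rightarrow> 'a list set" where
  "Us Y w = {u. suffix u w \<and> noP Y u}"

lemma star_concat: "x \<in> star Y \<longleftrightarrow> (\<exists>xs. set xs \<subseteq> Y \<and> x = concat xs)"
  unfolding star_def by auto

lemma bifix_pre: "bifix_code Y \<Longrightarrow> x \<in> Y \<Longrightarrow> y \<in> Y \<Longrightarrow> prefix x y \<Longrightarrow> x = y"
  unfolding bifix_code_def strict_prefix_def by blast
lemma bifix_suf: "bifix_code Y \<Longrightarrow> x \<in> Y \<Longrightarrow> y \<in> Y \<Longrightarrow> suffix x y \<Longrightarrow> x = y"
  unfolding bifix_code_def strict_suffix_def by blast
lemma bifix_nil: "bifix_code Y \<Longrightarrow> [] \<notin> Y"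
  unfolding bifix_code_def by blast

lemma uniqP:
  assumes "bifix_code Y"
  shows "set xs \<subseteq> Y \<Longrightarrow> set ys \<subseteq> Y \<Longrightarrow> concat xs @ u1 = concat ys @ u2 \<Longrightarrow> noP Y u1 \<Longrightarrow> noP Y u2
    \<Longrightarrow> xs = ys \<and> u1 = u2"
proof (induction xs arbitrary: ys)
  case Nil
  show ?case
  proof (cases ys)
    case Nil with \<open>concat [] @ u1 = concat ys @ u2\<close> show ?thesis by simp
  next
    case (Cons y ys')
    with Nil.prems have "prefix y u1" "y \<in> Y" by auto
    with Nil.prems show ?thesis unfolding noP_def by auto
  qed
next
  case (Cons x xs)
  obtain y ys' where ys: "ys = y # ys'" 
  proof (cases ys)
    case Nil
    with Cons.prems have "prefix x u2" "x \<in> Y" by auto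
    with Cons.prems show ?thesis unfolding noP_def by auto
  qed auto
  with Cons.prems have eq: "x @ (concat xs @ u1) = y @ (concat ys' @ u2)" by simp
  have "prefix x y \<or> prefix y x"
    by (metis eq prefix_same_cases prefixI)
  moreover have "x \<in> Y" "y \<in> Y" using Cons.prems ys by auto
  ultimately have "x = y" using bifix_pre[OF assms] by metis
  with eq have "concat xs @ u1 = concat ys' @ u2" by simp
  from Cons.IH[OF _ _ this] Cons.prems ys \<open>x = y\<close> show ?case by auto
qed

lemma uniqS:
  assumes "bifix_code Y"
  shows "set xs \<subseteq> Y \<Longrightarrow> set ys \<subseteq> Y \<Longrightarrow> v1 @ concat xs = v2 @ concat ys \<Longrightarrow> noS Y v1 \<Longrightarrow> noS Y v2
    \<Longrightarrow> v1 = v2"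
proof (induction xs arbitrary: ys rule: rev_induct)
  case Nil
  show ?case
  proof (cases ys rule: rev_exhaust)
    case Nil with \<open>v1 @ concat [] = v2 @ concat ys\<close> show ?thesis by simp
  next
    case (snoc ys' y)
    with Nil.prems have "suffix y v1" "y \<in> Y" by (auto simp: suffix_def)
    with Nil.prems show ?thesis unfolding noS_def by auto
  qed
next
  case (snoc x xs)
  obtain y ys' where ys: "ys = ys' @ [y]" 
  proof (cases ys rule: rev_exhaust)
    case Nil
    with snoc.prems have "suffix x v2" "x \<in> Y" by (auto simp: suffix_def)
    with snoc.prems show ?thesis unfolding noS_def by auto
  qed auto
  with snoc.prems have eq: "(v1 @ concat xs) @ x = (v2 @ concat ys') @ y" by simp
  have "suffix x y \<or> suffix y x"
    by (metis eq suffix_same_cases suffixI)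
  moreover have "x \<in> Y" "y \<in> Y" using snoc.prems ys by auto
  ultimately have "x = y" using bifix_suf[OF assms] by metis
  with eq have "v1 @ concat xs = v2 @ concat ys'" by simp
  from snoc.IH[OF _ _ this] snoc.prems ys \<open>x = y\<close> show ?case by auto
qed

lemma existsP:
  assumes "bifix_code Y"
  shows "\<exists>xs u. set xs \<subseteq> Y \<and> r = concat xs @ u \<and> noP Y u"
proof (induction r rule: length_induct)
  case (1 r)
  show ?case
  proof (cases "noP Y r")
    case True
    then show ?thesis by (intro exI[of _ "[]"] exI[of _ r]) auto
  next
    case False
    then obtain p where p: "prefix p r" "p \<in> Y" unfolding noP_def by auto
    then obtain r' where r: "r = p @ r'" by (auto simp: prefix_def)
    have "p \<noteq> []" using p bifix_nil[OF assms] by auto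
    then have "length r' < length r" using r by simp
    with 1 obtain xs u where "set xs \<subseteq> Y \<and> r' = concat xs @ u \<and> noP Y u" by blast
    then show ?thesis using r p by (intro exI[of _ "p # xs"]) auto
  qed
qed

lemma existsS:
  assumes "bifix_code Y"
  shows "\<exists>v xs. set xs \<subseteq> Y \<and> r = v @ concat xs \<and> noS Y v"
proof (induction r rule: length_induct)
  case (1 r)
  show ?case
  proof (cases "noS Y r")
    case True
    then show ?thesis by (intro exI[of _ r] exI[of _ "[]"]) auto
  next
    case False
    then obtain p where p: "suffix p r" "p \<in> Y" unfolding noS_def by auto
    then obtain r' where r: "r = r' @ p" by (auto simp: suffix_def)
    have "p \<noteq> []" using p bifix_nil[OF assms] by auto
    then have "length r' < length r" using r by simp
    with 1 obtain v xs where "set xs \<subseteq> Y \<and> r' = v @ concat xs \<and> noS Y v" by blast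
    then show ?thesis using r p by (intro exI[of _ v] exI[of _ "xs @ [p]"]) auto
  qed
qed

lemma parse_fst_inj:
  assumes "bifix_code Y" "(v, x, u) \<in> parses Y w" "(v, x', u') \<in> parses Y w"
  shows "x = x' \<and> u = u'"
proof -
  from assms(2,3) obtain xs xs' where xs: "set xs \<subseteq> Y" "x = concat xs" "set xs' \<subseteq> Y" "x' = concat xs'"
    and eq: "w = v @ x @ u" "w = v @ x' @ u'" and n: "noP Y u" "noP Y u'"
    unfolding parses_def star_concat noP_def by auto
  from eq xs have "concat xs @ u = concat xs' @ u'" by simp
  from uniqP[OF assms(1) xs(1) xs(3) this n] xs show ?thesis by simp
qed

lemma bij_V: assumes "bifix_code Y" shows "bij_betw fst (parses Y w) (Vs Y w)"
  unfolding bij_betw_def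
proof
  show "inj_on fst (parses Y w)"
    using parse_fst_inj[OF assms] by (auto simp: inj_on_def)
  show "fst ` parses Y w = Vs Y w"
  proof
    show "fst ` parses Y w \<subseteq> Vs Y w"
      by (auto simp: parses_def Vs_def noS_def prefix_def)
  next
    show "Vs Y w \<subseteq> fst ` parses Y w"
    proof
      fix v assume "v \<in> Vs Y w"
      then obtain r where r: "w = v @ r" "noS Y v" by (auto simp: Vs_def prefix_def)
      obtain xs u where "set xs \<subseteq> Y" "r = concat xs @ u" "noP Y u" using existsP[OF assms] by blast
      then have "(v, concat xs, u) \<in> parses Y w" using r
        by (auto simp: parses_def star_concat noS_def noP_def)
      then show "v \<in> fst ` parses Y w" by force
    qed
  qed
qed

lemma bij_U: assumes "bifix_code Y" shows "bij_betw (\<lambda>(v,x,u). u) (parses Y w) (Us Y w)"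
  unfolding bij_betw_def
proof
  show "inj_on (\<lambda>(v,x,u). u) (parses Y w)"
  proof (rule inj_onI)
    fix P Q assume PQ: "P \<in> parses Y w" "Q \<in> parses Y w" "(\<lambda>(v,x,u). u) P = (\<lambda>(v,x,u). u) Q"
    obtain v x u where P: "P = (v, x, u)" by (cases P) auto
    obtain v' x' u' where Q: "Q = (v', x', u')" by (cases Q) auto
    have uu: "u' = u" using PQ(3) P Q by simp
    have p: "(v, x, u) \<in> parses Y w" "(v', x', u) \<in> parses Y w" using PQ P Q uu by auto
    then obtain xs xs' where xs: "set xs \<subseteq> Y" "x = concat xs" "set xs' \<subseteq> Y" "x' = concat xs'"
      and eq: "w = v @ x @ u" "w = v' @ x' @ u" and n: "noS Y v" "noS Y v'"
      unfolding parses_def star_concat noS_def by auto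
    from eq xs have "v @ concat xs = v' @ concat xs'" by simp
    from uniqS[OF assms xs(1) xs(3) this n] have "v = v'" .
    with p parse_fst_inj[OF assms] have "x = x'" by blast
    with \<open>v = v'\<close> uu P Q show "P = Q" by simp
  qed
  show "(\<lambda>(v,x,u). u) ` parses Y w = Us Y w"
  proof
    show "(\<lambda>(v,x,u). u) ` parses Y w \<subseteq> Us Y w"
      by (auto simp: parses_def Us_def noP_def suffix_def)
  next
    show "Us Y w \<subseteq> (\<lambda>(v,x,u). u) ` parses Y w"
    proof
      fix u assume "u \<in> Us Y w"
      then obtain r where r: "w = r @ u" "noP Y u" by (auto simp: Us_def suffix_def)
      obtain v xs where "set xs \<subseteq> Y" "r = v @ concat xs" "noS Y v" using existsS[OF assms] by blast
      then have "(v, concat xs, u) \<in> parses Y w" using r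
        by (auto simp: parses_def star_concat noS_def noP_def)
      then show "u \<in> (\<lambda>(v,x,u). u) ` parses Y w" by force
    qed
  qed
qed

lemma finite_Vs: "finite (Vs Y w)"
proof -
  have "Vs Y w \<subseteq> set (prefixes w)" by (auto simp: Vs_def)
  then show ?thesis by (rule finite_subset) simp
qed

lemma finite_Us: "finite (Us Y w)"
proof -
  have "Us Y w \<subseteq> set (suffixes w)" by (auto simp: Us_def)
  then show ?thesis by (rule finite_subset) simp
qed

lemma delta_V: "bifix_code Y \<Longrightarrow> delta Y w = card (Vs Y w)"
  unfolding delta_def using bij_V bij_betw_same_card by blast

lemma delta_U: "bifix_code Y \<Longrightarrow> delta Y w = card (Us Y w)"
  unfolding delta_def using bij_U bij_betw_same_card by blast

lemma finite_parses: "bifix_code Y \<Longrightarrow> finite (parses Y w)"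
  using bij_V bij_betw_finite finite_Vs by blast

lemma delta_snoc:
  assumes "bifix_code Y"
  shows "delta Y (w @ [a]) = delta Y w + (if noS Y (w @ [a]) then 1 else 0)"
proof -
  have e: "Vs Y (w @ [a]) = Vs Y w \<union> (if noS Y (w @ [a]) then {w @ [a]} else {})"
    by (auto simp: Vs_def)
  have "w @ [a] \<notin> Vs Y w" by (auto simp: Vs_def dest: prefix_length_le)
  then show ?thesis unfolding delta_V[OF assms] e using finite_Vs[of Y w] by (auto simp: card_insert_disjoint)
qed

lemma delta_cons:
  assumes "bifix_code Y"
  shows "delta Y (a # w) = delta Y w + (if noP Y (a # w) then 1 else 0)"
proof -
  have e: "Us Y (a # w) = Us Y w \<union> (if noP Y (a # w) then {a # w} else {})"
    by (auto simp: Us_def suffix_Cons)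
  have "a # w \<notin> Us Y w" by (auto simp: Us_def dest: suffix_length_le)
  then show ?thesis unfolding delta_U[OF assms] e using finite_Us[of Y w] by (auto simp: card_insert_disjoint)
qed

lemma delta_mono_r: "bifix_code Y \<Longrightarrow> delta Y w \<le> delta Y (w @ s)"
proof (induction s rule: rev_induct)
  case Nil then show ?case by simp
next
  case (snoc x xs)
  then show ?case using delta_snoc[OF snoc.prems, of "w @ xs" x] by simp
qed

lemma delta_mono_l: "bifix_code Y \<Longrightarrow> delta Y w \<le> delta Y (p @ w)"
proof (induction p)
  case Nil then show ?case by simp
next
  case (Cons x xs)
  then show ?case using delta_cons[OF Cons.prems, of x "xs @ w"] by simp
qed

lemma delta_mono: "bifix_code Y \<Longrightarrow> delta Y w \<le> delta Y (p @ w @ s)"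
  using delta_mono_r delta_mono_l le_trans by (metis append_assoc)

lemma delta_nil: "bifix_code Y \<Longrightarrow> delta Y [] = 1"
proof -
  assume b: "bifix_code Y"
  have "Vs Y [] = {[]}" using bifix_nil[OF b] by (auto simp: Vs_def noS_def)
  then show ?thesis by (simp add: delta_V[OF b])
qed


lemma cutB:
  "set xs \<subseteq> X \<Longrightarrow> concat xs = w @ be \<Longrightarrow>
   \<exists>xs2 u'. set xs2 \<subseteq> X \<and> w = concat xs2 @ u' \<and> (u' = [] \<or> (\<exists>x\<in>X. strict_prefix u' x))"
proof (induction xs arbitrary: w)
  case Nil then show ?case by (intro exI[of _ "[]"]) auto
next
  case (Cons x xs)
  then have eq: "x @ concat xs = w @ be" by simp
  from eq consider us where "x = w @ us" "us @ concat xs = be" | us where "x @ us = w" "concat xs = us @ be"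
    unfolding append_eq_append_conv2 by blast
  then show ?case
  proof cases
    case 1
    show ?thesis
    proof (cases "us = []")
      case True
      then show ?thesis using 1 Cons.prems by (intro exI[of _ "[x]"] exI[of _ "[]"]) auto
    next
      case False
      then have "strict_prefix w x" using 1 by (auto simp: strict_prefix_def)
      then show ?thesis using Cons.prems by (intro exI[of _ "[]"] exI[of _ w]) auto
    qed
  next
    case 2
    have sx: "set xs \<subseteq> X" using Cons.prems by simp
    from Cons.IH[OF sx 2(2)] obtain xs2 u' where
      "set xs2 \<subseteq> X" "us = concat xs2 @ u'" "u' = [] \<or> (\<exists>x\<in>X. strict_prefix u' x)" by blast
    then show ?thesis using 2 Cons.prems by (intro exI[of _ "x # xs2"] exI[of _ u']) auto
  qed
qed

lemma cutA:
  "set xs \<subseteq> X \<Longrightarrow> concat xs = al @ w @ be \<Longrightarrow> (\<forall>p s. p \<noteq> [] \<longrightarrow> s \<noteq> [] \<longrightarrow> p @ w @ s \<notin> X) \<Longrightarrow>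
   \<exists>xs1 xs2 v' u'. set xs1 \<subseteq> X \<and> set xs2 \<subseteq> X \<and> w = v' @ concat xs2 @ u' \<and> al @ v' = concat xs1
     \<and> (v' = [] \<or> (\<exists>x\<in>X. strict_suffix v' x)) \<and> (u' = [] \<or> (\<exists>x\<in>X. strict_prefix u' x))"
proof (induction xs arbitrary: al)
  case Nil then show ?case by (intro exI[of _ "[]"] exI[of _ "[]"] exI[of _ "[]"] exI[of _ "[]"]) auto
next
  case (Cons x xs)
  then have eq: "x @ concat xs = al @ (w @ be)" by simp
  from eq consider us where "x = al @ us" "us @ concat xs = w @ be" | us where "x @ us = al" "concat xs = us @ w @ be"
    unfolding append_eq_append_conv2 by blast
  then show ?case
  proof cases
    case 2
    have sx: "set xs \<subseteq> X" using Cons.prems by simp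
    from Cons.IH[OF sx 2(2) Cons.prems(3)] obtain xs1 xs2 v' u' where
      h: "set xs1 \<subseteq> X" "set xs2 \<subseteq> X" "w = v' @ concat xs2 @ u'" "us @ v' = concat xs1"
      "v' = [] \<or> (\<exists>x\<in>X. strict_suffix v' x)" "u' = [] \<or> (\<exists>x\<in>X. strict_prefix u' x)" by blast
    then show ?thesis using 2 Cons.prems
      by (intro exI[of _ "x # xs1"] exI[of _ xs2] exI[of _ v'] exI[of _ u']) auto
  next
    case 1
    note o1 = 1
    have xX: "x \<in> X" using Cons.prems by auto
    from 1(2) consider vs where "us = w @ vs" "vs @ concat xs = be" | vs where "us @ vs = w" "concat xs = vs @ be"
      unfolding append_eq_append_conv2 by blast
    then show ?thesis
    proof cases
      case 1
      show ?thesis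
      proof (cases "vs = []")
        case True
        show ?thesis
        proof (cases "al = []")
          case True
          then show ?thesis using o1 1 \<open>vs = []\<close> xX
            by (intro exI[of _ "[]"] exI[of _ "[x]"] exI[of _ "[]"] exI[of _ "[]"]) auto
        next
          case False
          then have "strict_suffix w x" using o1 1 \<open>vs = []\<close> by (auto simp: strict_suffix_def suffix_def)
          then show ?thesis using o1 1 \<open>vs = []\<close> xX
            by (intro exI[of _ "[x]"] exI[of _ "[]"] exI[of _ w] exI[of _ "[]"]) auto
        qed
      next
        case False
        then have "al = []" using Cons.prems(3) o1 1 xX by auto
        then have "strict_prefix w x" using o1 1 False by (auto simp: strict_prefix_def)
        then show ?thesis using \<open>al = []\<close> xX
          by (intro exI[of _ "[]"] exI[of _ "[]"] exI[of _ "[]"] exI[of _ w]) auto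
      qed
    next
      case 2
      have sx: "set xs \<subseteq> X" using Cons.prems by simp
      from cutB[OF sx 2(2)] obtain xs2 u' where
        h: "set xs2 \<subseteq> X" "vs = concat xs2 @ u'" "u' = [] \<or> (\<exists>x\<in>X. strict_prefix u' x)" by blast
      show ?thesis
      proof (cases "al = []")
        case True
        then show ?thesis using o1 2 h xX
          by (intro exI[of _ "[]"] exI[of _ "x # xs2"] exI[of _ "[]"] exI[of _ u']) auto
      next
        case False
        then have "strict_suffix us x" using o1 by (auto simp: strict_suffix_def suffix_def)
        then show ?thesis using o1 2 h xX
          by (intro exI[of _ "[x]"] exI[of _ xs2] exI[of _ us] exI[of _ u']) auto
      qed
    qed
  qed
qed


lemma fact_app: "factorial F \<Longrightarrow> p @ q @ r \<in> F \<Longrightarrow> q \<in> F"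
  unfolding factorial_def factor_def by blast
lemma fact_pre: "factorial F \<Longrightarrow> p @ q \<in> F \<Longrightarrow> p \<in> F"
  using fact_app[of F "[]" p q] by simp
lemma fact_suf: "factorial F \<Longrightarrow> p @ q \<in> F \<Longrightarrow> q \<in> F"
  using fact_app[of F p q "[]"] by simp

lemma noS_strict:
  assumes b: "bifix_code X" and h: "v = [] \<or> (\<exists>x\<in>X. strict_suffix v x)" shows "noS X v"
  unfolding noS_def
proof (intro allI impI)
  fix s assume s: "suffix s v"
  show "s \<notin> X"
  proof (cases "v = []")
    case True then show ?thesis using s bifix_nil[OF b] by simp
  next
    case False
    then obtain x where x: "x \<in> X" "strict_suffix v x" using h by blast
    then have l: "length v < length x" by (simp add: suffix_length_less)
    have "suffix s x" using s x by (auto simp: strict_suffix_def intro: suffix_order.trans)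
    moreover have "length s < length x" using suffix_length_le[OF s] l by simp
    ultimately show ?thesis using bifix_suf[OF b _ x(1)] by auto
  qed
qed

lemma noP_strict:
  assumes b: "bifix_code X" and h: "u = [] \<or> (\<exists>x\<in>X. strict_prefix u x)" shows "noP X u"
  unfolding noP_def
proof (intro allI impI)
  fix s assume s: "prefix s u"
  show "s \<notin> X"
  proof (cases "u = []")
    case True then show ?thesis using s bifix_nil[OF b] by simp
  next
    case False
    then obtain x where x: "x \<in> X" "strict_prefix u x" using h by blast
    then have l: "length u < length x" by (simp add: prefix_length_less)
    have "prefix s x" using s x by (auto simp: strict_prefix_def intro: prefix_order.trans)
    moreover have "length s < length x" using prefix_length_le[OF s] l by simp
    ultimately show ?thesis using bifix_pre[OF b _ x(1)] by auto
  qed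
qed

lemma F1c:
  assumes bif: "bifix_code X" and rec: "recurrent A F" and deg: "has_F_degree F X d"
    and wF: "w \<in> F" and ni: "\<forall>p s. p \<noteq> [] \<longrightarrow> s \<noteq> [] \<longrightarrow> p @ w @ s \<notin> X"
  shows "d \<le> delta X w"
proof -
  obtain z where zF: "z \<in> F" "delta X z = d" using deg unfolding has_F_degree_def by blast
  have bound: "\<And>q. q \<in> F \<Longrightarrow> delta X q \<le> d" using deg unfolding has_F_degree_def by blast
  have fac: "factorial F" and rr: "\<forall>u\<in>F. \<forall>w\<in>F. \<exists>v\<in>F. u @ v @ w \<in> F"
    using rec unfolding recurrent_def by auto
  obtain t where t: "z @ t @ w \<in> F" using rr zF wF by blast
  obtain t' where t': "(z @ t @ w) @ t' @ z \<in> F" using rr zF t by blast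
  define y where "y = z @ t @ w @ t' @ z"
  have yF: "y \<in> F" using t' by (simp add: y_def)
  have dy: "delta X y = d"
    using bound[OF yF] delta_mono_r[OF bif, of z "t @ w @ t' @ z"] zF by (simp add: y_def)
  have c1: "length v \<le> length z" if P: "(v, x, u) \<in> parses X y" for v x u
  proof (rule ccontr)
    assume "\<not> length v \<le> length z"
    then have "v \<noteq> []" by auto
    then obtain v0 a where v: "v = v0 @ [a]" by (metis rev_exhaust)
    have pv: "prefix v y" using P by (auto simp: parses_def)
    have "length z \<le> length v0" using v \<open>\<not> length v \<le> length z\<close> by simp
    moreover have "prefix z y" by (simp add: y_def)
    moreover have "prefix v0 y" using pv v by (metis prefix_order.dual_order.trans prefixI)
    ultimately have "prefix z v0" by (metis prefix_length_prefix)
    then obtain r where v0: "v0 = z @ r" by (auto simp: prefix_def)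
    have vF: "v \<in> F" using pv yF fac fact_pre by (metis prefix_def)
    have "delta X z \<le> delta X v0" using v0 delta_mono_r[OF bif] by simp
    moreover have "noS X v" using P by (auto simp: parses_def noS_def)
    ultimately have "delta X v > d" using delta_snoc[OF bif, of v0 a] zF v by simp
    with bound[OF vF] show False by simp
  qed
  have c2: "length u \<le> length z" if P: "(v, x, u) \<in> parses X y" for v x u
  proof (rule ccontr)
    assume "\<not> length u \<le> length z"
    then have "u \<noteq> []" by auto
    then obtain u0 a where u: "u = a # u0" by (metis list.exhaust)
    have pu: "suffix u y" using P by (auto simp: parses_def suffix_def)
    have "length z \<le> length u0" using u \<open>\<not> length u \<le> length z\<close> by simp
    moreover have "suffix z y" by (simp add: y_def suffix_def)
    moreover have "suffix u0 y" using pu u by (metis suffix_ConsD)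
    ultimately have "suffix z u0" by (metis suffix_length_suffix)
    then obtain r where u0: "u0 = r @ z" by (auto simp: suffix_def)
    have uF: "u \<in> F" using pu yF fac fact_suf by (metis suffix_def)
    have "delta X z \<le> delta X u0" using u0 delta_mono_l[OF bif] by simp
    moreover have "noP X u" using P by (auto simp: parses_def noP_def)
    ultimately have "delta X u > d" using delta_cons[OF bif, of a u0] zF u by simp
    with bound[OF uF] show False by simp
  qed
  define R where "R = (\<lambda>(P::'a list \<times> 'a list \<times> 'a list) Q. Q \<in> parses X w \<and> (\<exists>xs1. set xs1 \<subseteq> X \<and> (z @ t) @ fst Q = fst P @ concat xs1))"
  have exR: "\<exists>Q. R P Q" if P: "P \<in> parses X y" for P
  proof -
    obtain v x u where Pe: "P = (v, x, u)" by (cases P) auto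
    with P obtain xs where xs: "set xs \<subseteq> X" "x = concat xs" and ye: "y = v @ x @ u"
      by (auto simp: parses_def star_concat)
    have lv: "length v \<le> length (z @ t)" using c1 P Pe by fastforce
    have lu: "length u \<le> length (t' @ z)" using c2 P Pe by fastforce
    have "prefix v y" using ye by simp
    moreover have "prefix (z @ t) y" unfolding y_def by (metis append_assoc prefixI)
    ultimately have "prefix v (z @ t)" using lv by (metis prefix_length_prefix)
    then obtain al where al: "z @ t = v @ al" by (auto simp: prefix_def)
    have "suffix u y" using ye by (metis append_assoc suffixI)
    moreover have "suffix (t' @ z) y" unfolding y_def by (metis append_assoc suffixI)
    ultimately have "suffix u (t' @ z)" using lu by (metis suffix_length_suffix)
    then obtain be where be: "t' @ z = be @ u" by (auto simp: suffix_def)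
    have "y = (z @ t) @ w @ (t' @ z)" by (simp add: y_def)
    also have "\<dots> = (v @ al) @ w @ (be @ u)" by (simp only: al be)
    finally have "v @ concat xs @ u = v @ (al @ w @ be) @ u"
      using ye xs by simp
    then have cx: "concat xs = al @ w @ be" by simp
    from cutA[OF xs(1) cx ni] obtain xs1 xs2 v' u' where
      h: "set xs1 \<subseteq> X" "set xs2 \<subseteq> X" "w = v' @ concat xs2 @ u'" "al @ v' = concat xs1"
         "v' = [] \<or> (\<exists>x\<in>X. strict_suffix v' x)" "u' = [] \<or> (\<exists>x\<in>X. strict_prefix u' x)" by blast
    have "(v', concat xs2, u') \<in> parses X w"
      using h noS_strict[OF bif h(5)] noP_strict[OF bif h(6)]
      by (auto simp: parses_def star_concat noS_def noP_def)
    moreover have "(z @ t) @ v' = v @ concat xs1" using al h(4) by simp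
    ultimately show ?thesis unfolding R_def using h(1) Pe by (intro exI[of _ "(v', concat xs2, u')"]) auto
  qed
  define f where "f = (\<lambda>P. SOME Q. R P Q)"
  have fR: "R P (f P)" if "P \<in> parses X y" for P
    unfolding f_def using exR[OF that] by (rule someI_ex)
  have inj: "inj_on f (parses X y)"
  proof (rule inj_onI)
    fix P1 P2 assume P: "P1 \<in> parses X y" "P2 \<in> parses X y" "f P1 = f P2"
    obtain xs1 where x1: "set xs1 \<subseteq> X" "(z @ t) @ fst (f P1) = fst P1 @ concat xs1"
      using fR[OF P(1)] unfolding R_def by blast
    obtain xs2 where x2: "set xs2 \<subseteq> X" "(z @ t) @ fst (f P2) = fst P2 @ concat xs2"
      using fR[OF P(2)] unfolding R_def by blast
    obtain v1 x1' u1 where P1: "P1 = (v1, x1', u1)" by (cases P1) auto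
    obtain v2 x2' u2 where P2: "P2 = (v2, x2', u2)" by (cases P2) auto
    have n: "noS X v1" "noS X v2" using P P1 P2 by (auto simp: parses_def noS_def)
    have "v1 @ concat xs1 = v2 @ concat xs2" using x1 x2 P P1 P2 by simp
    from uniqS[OF bif x1(1) x2(1) this n] have "v1 = v2" .
    with parse_fst_inj[OF bif] P P1 P2 show "P1 = P2" by blast
  qed
  have "f ` parses X y \<subseteq> parses X w" using fR unfolding R_def by blast
  then have "card (parses X y) \<le> card (parses X w)"
    using card_inj_on_le[OF inj _ finite_parses[OF bif]] by blast
  then show ?thesis using dy unfolding delta_def by simp
qed


lemma exsuf: "[] \<in> I \<Longrightarrow> q \<notin> I \<Longrightarrow> \<exists>b s1. suffix (b # s1) q \<and> b # s1 \<notin> I \<and> s1 \<in> I"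
proof (induction q)
  case Nil then show ?case by simp
next
  case (Cons b q1)
  show ?case
  proof (cases "q1 \<in> I")
    case True then show ?thesis using Cons.prems by auto
  next
    case False
    from Cons.IH[OF Cons.prems(1) False] show ?thesis by (meson suffix_ConsI)
  qed
qed

theorem mainTheorem4:
  fixes A :: "'a set" and F X :: "'a list set" and d :: nat
  assumes "finite A"
    and "recurrent A F"
    and "X \<subseteq> F"
    and "bifix_code X"
    and "has_F_degree F X d"
    and "d \<ge> 2"
  defines "I \<equiv> internal A X"
    and "K \<equiv> kernel A X"
  defines "G \<equiv> ({w @ [a] | w a. w \<in> I \<and> a \<in> A} \<inter> F) - I"
    and "D \<equiv> ({[a] @ w | a w. a \<in> A \<and> w \<in> I} \<inter> F) - I"
  shows "bifix_code (K \<union> (G \<inter> D)) \<and> has_F_degree F (K \<union> (G \<inter> D)) (d - 1)"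
proof -
  note bif = assms(4)
  have FA: "F \<subseteq> lists A" and fac: "factorial F" and Fne: "F \<noteq> {}"
    using assms(2) unfolding recurrent_def by auto
  have XF: "X \<subseteq> F" by (rule assms(3))
  have bound: "\<And>q. q \<in> F \<Longrightarrow> delta X q \<le> d" using assms(5) unfolding has_F_degree_def by blast
  obtain w0 where w0: "w0 \<in> F" "delta X w0 = d" using assms(5) unfolding has_F_degree_def by blast
  have Iint: "u \<in> I \<longleftrightarrow> u \<in> lists A \<and> (\<exists>p s. p \<in> lists A \<and> s \<in> lists A \<and> p \<noteq> [] \<and> s \<noteq> [] \<and> p @ u @ s \<in> X)"
    for u unfolding I_def internal_def by simp
  have I_fac: "q \<in> I" if "p @ q @ r \<in> I" for p q r
  proof -
    from that obtain p' s' where h: "p @ q @ r \<in> lists A" "p' \<in> lists A" "s' \<in> lists A" "p' \<noteq> []" "s' \<noteq> []"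
      "p' @ (p @ q @ r) @ s' \<in> X" unfolding Iint by blast
    then have "(p' @ p) @ q @ (r @ s') \<in> X" by simp
    moreover have "p' @ p \<in> lists A" "r @ s' \<in> lists A" "q \<in> lists A" using h by auto
    ultimately show ?thesis unfolding Iint using h(4,5) by blast
  qed
  have I_pre: "p \<in> I" if "p @ r \<in> I" for p r using I_fac[of "[]" p r] that by simp
  have I_suf: "r \<in> I" if "p @ r \<in> I" for p r using I_fac[of p r "[]"] that by simp
  have I_F: "u \<in> F" if "u \<in> I" for u
    using that XF fact_app[OF fac] unfolding Iint by blast
  have ni: "\<forall>p s. p \<noteq> [] \<longrightarrow> s \<noteq> [] \<longrightarrow> p @ w @ s \<notin> X" if "w \<in> F" "w \<notin> I" for w
  proof (intro allI impI)
    fix p s :: "'a list" assume ps: "p \<noteq> []" "s \<noteq> []"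
    show "p @ w @ s \<notin> X"
    proof
      assume "p @ w @ s \<in> X"
      moreover then have "p @ w @ s \<in> lists A" using XF FA by blast
      ultimately have "w \<in> I" unfolding Iint using ps by auto
      with that show False by simp
    qed
  qed
  have F1c': "d \<le> delta X w" if "w \<in> F" "w \<notin> I" for w
    using F1c[OF bif assms(2) assms(5) that(1) ni[OF that]] .
  have F1a: "delta X w < d" if "w \<in> I" for w
  proof -
    from that obtain p s where h: "p \<noteq> []" "s \<noteq> []" "p @ w @ s \<in> X" unfolding Iint by blast
    obtain c p' where p: "p = c # p'" using h(1) by (cases p) auto
    obtain s' e where s: "s = s' @ [e]" using h(2) by (cases s rule: rev_exhaust) auto
    have np: "noP X (c # p' @ w @ s')"
      unfolding noP_def
    proof (intro allI impI)
      fix pr assume pr: "prefix pr (c # p' @ w @ s')"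
      show "pr \<notin> X"
      proof
        assume prX: "pr \<in> X"
        have "prefix pr (p @ w @ s)" using pr p s
          by (metis append_Cons append_assoc prefix_append)
        then have "pr = p @ w @ s" using bifix_pre[OF bif prX h(3)] by simp
        with pr p s show False using prefix_length_le by fastforce
      qed
    qed
    have "delta X w \<le> delta X (p' @ w @ s')" by (rule delta_mono[OF bif])
    also have "\<dots> < delta X (c # p' @ w @ s')" using delta_cons[OF bif, of c "p' @ w @ s'"] np by simp
    also have "\<dots> \<le> delta X ((c # p' @ w @ s') @ [e])" by (rule delta_mono_r[OF bif])
    also have "\<dots> = delta X (p @ w @ s)" using p s by simp
    also have "\<dots> \<le> d" using bound XF h(3) by blast
    finally show ?thesis .
  qed
  have nilF: "[] \<in> F"
  proof -
    obtain u where "u \<in> F" using Fne by blast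
    then show ?thesis using fact_app[OF fac, of "[]" "[]" u] by simp
  qed
  have nilI: "[] \<in> I"
  proof (rule ccontr)
    assume "[] \<notin> I"
    then have "d \<le> delta X []" using F1c' nilF by blast
    then show False using delta_nil[OF bif] assms(6) by simp
  qed
  have Kc: "K = X \<inter> I" unfolding K_def kernel_def I_def by simp
  have Mc: "y \<in> G \<inter> D \<longleftrightarrow> y \<in> F \<and> y \<notin> I \<and> (\<exists>y0 a. y = y0 @ [a] \<and> y0 \<in> I \<and> a \<in> A)
     \<and> (\<exists>b y1. y = b # y1 \<and> b \<in> A \<and> y1 \<in> I)" for y
    unfolding G_def D_def by auto
  have Mprops: "noS X y \<and> noP X y" if "y \<in> G \<inter> D" for y
  proof -
    from that obtain y0 a b y1 where h: "y \<in> F" "y \<notin> I" "y = y0 @ [a]" "y0 \<in> I" "y = b # y1" "y1 \<in> I"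
      unfolding Mc by blast
    have "d \<le> delta X y" using F1c' h by blast
    moreover have "delta X y0 < d" "delta X y1 < d" using F1a h by auto
    ultimately show ?thesis using delta_snoc[OF bif, of y0 a] delta_cons[OF bif, of b y1] h
      by (auto split: if_splits)
  qed
  define Y where "Y = K \<union> (G \<inter> D)"
  have M_notI: "y \<notin> I" if "y \<in> G \<inter> D" for y using that Mc by blast
  have bifY: "bifix_code Y"
    unfolding bifix_code_def
  proof (intro conjI ballI)
    show "[] \<notin> Y" unfolding Y_def Kc using bifix_nil[OF bif] Mc by auto
  next
    fix x y assume xy: "x \<in> Y" "y \<in> Y"
    show "\<not> strict_prefix x y"
    proof
      assume sp: "strict_prefix x y"
      show False
      proof (cases "y \<in> K")
        case True
        then have "x \<in> I" using sp I_pre unfolding Kc strict_prefix_def prefix_def by blast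
        then have "x \<in> X" using xy(1) M_notI unfolding Y_def Kc by blast
        then show ?thesis using True sp bifix_pre[OF bif] unfolding Kc strict_prefix_def by blast
      next
        case False
        then have yM: "y \<in> G \<inter> D" using xy(2) unfolding Y_def by blast
        then obtain y0 a where y: "y = y0 @ [a]" "y0 \<in> I" unfolding Mc by blast
        have "prefix x y0" using sp y by (metis prefix_snoc strict_prefix_def)
        then have "x \<in> I" using y(2) I_pre unfolding prefix_def by blast
        then have "x \<in> X" using xy(1) M_notI unfolding Y_def Kc by blast
        with Mprops[OF yM] sp show False unfolding noP_def strict_prefix_def by blast
      qed
    qed
    show "\<not> strict_suffix x y"
    proof
      assume sp: "strict_suffix x y"
      show False
      proof (cases "y \<in> K")
        case True
        then have "x \<in> I" using sp I_suf unfolding Kc strict_suffix_def suffix_def by blast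
        then have "x \<in> X" using xy(1) M_notI unfolding Y_def Kc by blast
        then show ?thesis using True sp bifix_suf[OF bif] unfolding Kc strict_suffix_def by blast
      next
        case False
        then have yM: "y \<in> G \<inter> D" using xy(2) unfolding Y_def by blast
        then obtain b y1 where y: "y = b # y1" "y1 \<in> I" unfolding Mc by blast
        have "suffix x y1" using sp y by (metis suffix_Cons strict_suffix_def)
        then have "x \<in> I" using y(2) I_suf unfolding suffix_def by blast
        then have "x \<in> X" using xy(1) M_notI unfolding Y_def Kc by blast
        with Mprops[OF yM] sp show False unfolding noS_def strict_suffix_def by blast
      qed
    qed
  qed
  have EY: "delta Y w = delta X w" if "w \<in> I" for w
  proof -
    have "Vs X w = Vs Y w"
    proof -
      have "s \<in> X \<longleftrightarrow> s \<in> Y" if "prefix v w" "suffix s v" for v s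
      proof -
        from that obtain r q where "w = v @ r" "v = q @ s" by (auto simp: prefix_def suffix_def)
        then have "s \<in> I" using I_fac \<open>w \<in> I\<close> by simp
        then show ?thesis unfolding Y_def Kc using M_notI by blast
      qed
      then show ?thesis unfolding Vs_def noS_def by blast
    qed
    then show ?thesis using delta_V[OF bif] delta_V[OF bifY] by simp
  qed
  have sufY: "\<not> noS Y q" if qF: "q \<in> F" and qI: "q \<notin> I" for q
  proof -
    obtain b s1 where h: "suffix (b # s1) q" "b # s1 \<notin> I" "s1 \<in> I" using exsuf[OF nilI qI] by blast
    have sF: "b # s1 \<in> F" using h(1) qF fact_suf[OF fac] unfolding suffix_def by blast
    have sA: "b # s1 \<in> lists A" using sF FA by blast
    show ?thesis
    proof (cases "s1 = []")
      case True
      have "[b] \<in> G \<inter> D" using sF sA h True nilI unfolding Mc by (auto intro!: exI[of _ "[]"])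
      then show ?thesis using h(1) True unfolding noS_def Y_def by blast
    next
      case False
      then obtain s1' a where s1: "s1 = s1' @ [a]" by (cases s1 rule: rev_exhaust) auto
      show ?thesis
      proof (cases "b # s1' \<in> I")
        case True
        have "b # s1 \<in> G \<inter> D" using sF sA h True s1 unfolding Mc by auto
        then show ?thesis using h(1) unfolding noS_def Y_def by blast
      next
        case False
        have s0F: "b # s1' \<in> F" using sF s1 fact_pre[OF fac, of "b # s1'" "[a]"] by simp
        have "d \<le> delta X (b # s1')" using F1c' s0F False by blast
        moreover have "delta X (b # s1') \<le> delta X s1' + 1" using delta_cons[OF bif, of b s1'] by simp
        moreover have "delta X s1 < d" using F1a h(3) by blast
        moreover have s1'I: "s1' \<in> I" using h(3) s1 I_pre by blast
        ultimately have "\<not> noS X s1" using delta_snoc[OF bif, of s1' a] s1 by (auto split: if_splits)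
        then obtain y where y: "suffix y s1" "y \<in> X" unfolding noS_def by blast
        then have "y \<in> I" using h(3) I_suf unfolding suffix_def by blast
        then have "y \<in> Y" using y unfolding Y_def Kc by blast
        moreover have "suffix y q" using y(1) h(1) by (meson suffix_ConsI suffix_order.trans)
        ultimately show ?thesis unfolding noS_def by blast
      qed
    qed
  qed
  have Qd: "delta Y q = d - 1" if "q \<in> F" "q \<notin> I" for q
    using that
  proof (induction q rule: rev_induct)
    case Nil then show ?case using nilI by simp
  next
    case (snoc a q0)
    have q0F: "q0 \<in> F" using snoc.prems(1) fact_pre[OF fac] by blast
    have e: "delta Y (q0 @ [a]) = delta Y q0" using delta_snoc[OF bifY, of q0 a] sufY[OF snoc.prems] by simp
    show ?case
    proof (cases "q0 \<in> I")
      case True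
      have "d \<le> delta X (q0 @ [a])" using F1c' snoc.prems by blast
      moreover have "delta X (q0 @ [a]) \<le> delta X q0 + 1" using delta_snoc[OF bif, of q0 a] by simp
      moreover have "delta X q0 < d" using F1a True by blast
      ultimately have "delta X q0 = d - 1" by simp
      then show ?thesis using e EY[OF True] by simp
    next
      case False
      then show ?thesis using e snoc.IH q0F by simp
    qed
  qed
  have "has_F_degree F Y (d - 1)"
    unfolding has_F_degree_def
  proof
    have "w0 \<notin> I" using F1a w0 by fastforce
    then show "\<exists>w\<in>F. delta Y w = d - 1" using Qd w0 by blast
  next
    show "\<forall>w\<in>F. delta Y w \<le> d - 1"
    proof
      fix w assume wF: "w \<in> F"
      show "delta Y w \<le> d - 1"
      proof (cases "w \<in> I")
        case True then show ?thesis using EY F1a by fastforce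
      next
        case False then show ?thesis using Qd wF by simp
      qed
    qed
  qed
  with bifY show ?thesis unfolding Y_def by blast
qed

end
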